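(* There exists $C(\tau_0)\in(0,\infty)$ such that for all $\tau\in(0,\tau_0)$ and all $x_1,x_2,x\in\mathbb R^2$: (1) $\langle x_2-x_1,\psi_\tau(x_2)-\psi_\tau(x_1)\rangle\le C(\tau_0)\|x_2-x_1\|^2$; (2) $\|\psi_\tau(x_2)-\psi_\tau(x_1)\|\le C(\tau_0)(1+\|x_1\|^3+\|x_2\|^3)\|x_2-x_1\|$; (3) $\|\psi_\tau(x)-F(x)\|\le C(\tau_0)\,\tau\,(1+\|x\|^5)$. Moreover $\sup_{\tau\in(0,\tau_0)}\|\psi_\tau(0)\|<\infty$.
   Context: $\langle\cdot,\cdot\rangle$, $\|\cdot\|$ are the Euclidean inner product and norm on $\mathbb R^2$. Fix real $\gamma_1,\gamma_2,\beta$, $B=\begin{pmatrix}0&-1\\ \gamma_1&-\gamma_2\end{pmatrix}$ and $F(u,v)=(u-u^3-v,\ \gamma_1u-\gamma_2v+\beta)$. For $t\ge0$, $\phi^{\rm NL}_t(u,v)=\big(u/\sqrt{u^2+(1-u^2)e^{-2t}},\ v+\beta t\big)$ and $\phi^{\rm L}_t(x)=e^{tB}x$. Fix $\tau_0>0$; for $\tau\in(0,\tau_0)$ let $\phi_\tau=\phi^{\rm L}_\tau\circ\phi^{\rm NL}_\tau$ and $\psi_\tau(x)=(\phi_\tau(x)-x)/\tau$. *)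

theory Defs
  imports "HOL-Analysis.Analysis"
begin

text \<open>Points of R^2 are pairs (u, v) :: real \<times> real; the product type carries the
Euclidean inner product and norm.\<close>

text \<open>The linear map x \<mapsto> B x with B = [[0, -1], [g1, -g2]].\<close>
definition Bmap :: "real \<Rightarrow> real \<Rightarrow> real \<times> real \<Rightarrow> real \<times> real" where
  "Bmap g1 g2 x = (- snd x, g1 * fst x - g2 * snd x)"

definition Ffield :: "real \<Rightarrow> real \<Rightarrow> real \<Rightarrow> real \<times> real \<Rightarrow> real \<times> real" where
  "Ffield g1 g2 b x = (fst x - fst x ^ 3 - snd x, g1 * fst x - g2 * snd x + b)"

definition phiNL :: "real \<Rightarrow> real \<Rightarrow> real \<times> real \<Rightarrow> real \<times> real" where
  "phiNL b t x = (fst x / sqrt (fst x ^ 2 + (1 - fst x ^ 2) * exp (-2 * t)), snd x + b * t)"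

text \<open>Matrix exponential applied to x: e^{tB} x = sum_n (t^n / n!) B^n x.\<close>
definition phiL :: "real \<Rightarrow> real \<Rightarrow> real \<Rightarrow> real \<times> real \<Rightarrow> real \<times> real" where
  "phiL g1 g2 t x = (\<Sum>n. (t ^ n / fact n) *\<^sub>R ((Bmap g1 g2 ^^ n) x))"

definition phi :: "real \<Rightarrow> real \<Rightarrow> real \<Rightarrow> real \<Rightarrow> real \<times> real \<Rightarrow> real \<times> real" where
  "phi g1 g2 b t = phiL g1 g2 t \<circ> phiNL b t"

definition psi :: "real \<Rightarrow> real \<Rightarrow> real \<Rightarrow> real \<Rightarrow> real \<times> real \<Rightarrow> real \<times> real" where
  "psi g1 g2 b t x = (1 / t) *\<^sub>R (phi g1 g2 b t x - x)"

end

theory Submission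
  imports Defs
begin


lemma abs_le_norm_fst: "\<bar>fst x\<bar> \<le> norm (x::real\<times>real)"
  by (metis norm_fst_le prod.collapse real_norm_def)
lemma abs_le_norm_snd: "\<bar>snd x\<bar> \<le> norm (x::real\<times>real)"
  by (metis norm_snd_le prod.collapse real_norm_def)
lemma norm_pair_le_abs: "norm (a::real, b::real) \<le> \<bar>a\<bar> + \<bar>b\<bar>"
  using norm_Pair_le[of a b] by simp

definition MB :: "real \<Rightarrow> real \<Rightarrow> real" where "MB g1 g2 = 1 + \<bar>g1\<bar> + \<bar>g2\<bar>"

lemma MB_pos: "MB g1 g2 \<ge> 1" unfolding MB_def by simp

lemma Bmap_norm: "norm (Bmap g1 g2 x) \<le> MB g1 g2 * norm x"
proof -
  have u: "\<bar>fst x\<bar> \<le> norm x" and v: "\<bar>snd x\<bar> \<le> norm x" by (rule abs_le_norm_fst, rule abs_le_norm_snd)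
  have "norm (Bmap g1 g2 x) \<le> \<bar>snd x\<bar> + \<bar>g1 * fst x - g2 * snd x\<bar>"
    unfolding Bmap_def using norm_pair_le_abs[of "- snd x"] by simp
  also have "\<dots> \<le> \<bar>snd x\<bar> + \<bar>g1\<bar> * \<bar>fst x\<bar> + \<bar>g2\<bar> * \<bar>snd x\<bar>"
    by (simp add: abs_mult[symmetric] abs_triangle_ineq4 add.assoc)
  also have "\<dots> \<le> norm x + \<bar>g1\<bar> * norm x + \<bar>g2\<bar> * norm x"
    using u v by (intro add_mono mult_left_mono) auto
  finally show ?thesis by (simp add: MB_def algebra_simps)
qed

lemma Bmap_diff: "Bmap g1 g2 (x - y) = Bmap g1 g2 x - Bmap g1 g2 y"
  unfolding Bmap_def by (simp add: algebra_simps)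

lemma Bpow_diff: "(Bmap g1 g2 ^^ n) (x - y) = (Bmap g1 g2 ^^ n) x - (Bmap g1 g2 ^^ n) y"
  by (induction n) (simp_all add: Bmap_diff)

lemma Bpow_norm: "norm ((Bmap g1 g2 ^^ n) x) \<le> MB g1 g2 ^ n * norm x"
proof (induction n)
  case 0 then show ?case by simp
next
  case (Suc n)
  have "norm ((Bmap g1 g2 ^^ Suc n) x) \<le> MB g1 g2 * norm ((Bmap g1 g2 ^^ n) x)"
    using Bmap_norm by simp
  also have "\<dots> \<le> MB g1 g2 * (MB g1 g2 ^ n * norm x)"
    using Suc MB_pos[of g1 g2] by (intro mult_left_mono) auto
  finally show ?case by (simp add: algebra_simps)
qed

lemma ser_bound: "norm ((t ^ n / fact n) *\<^sub>R ((Bmap g1 g2 ^^ n) x)) \<le> (\<bar>t\<bar> * MB g1 g2) ^ n / fact n * norm x"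
proof -
  have "norm ((t ^ n / fact n) *\<^sub>R ((Bmap g1 g2 ^^ n) x)) = \<bar>t\<bar> ^ n / fact n * norm ((Bmap g1 g2 ^^ n) x)"
    by (simp add: power_abs)
  also have "\<dots> \<le> \<bar>t\<bar> ^ n / fact n * (MB g1 g2 ^ n * norm x)"
    by (intro mult_left_mono Bpow_norm) auto
  finally show ?thesis by (simp add: power_mult_distrib)
qed

lemma summable_expser: "summable (\<lambda>n. (c::real) ^ n / fact n * k)"
proof -
  have "summable (\<lambda>n. inverse (fact n) * c ^ n)" by (rule summable_exp)
  then have "summable (\<lambda>n. (inverse (fact n) * c ^ n) * k)" by (rule summable_mult2)
  then show ?thesis by (simp add: divide_inverse mult_ac)
qed

lemma summable_ser: "summable (\<lambda>n. (t ^ n / fact n) *\<^sub>R ((Bmap g1 g2 ^^ n) x))"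
  by (rule summable_comparison_test'[OF summable_expser ser_bound])

lemma phiL_diff: "phiL g1 g2 t x - phiL g1 g2 t y = phiL g1 g2 t (x - y)"
  unfolding phiL_def
  by (simp add: suminf_diff[OF summable_ser summable_ser] Bpow_diff scaleR_diff_right)

lemma phiL_zero: "phiL g1 g2 t 0 = 0"
  using phiL_diff[of g1 g2 t 0 0] by simp

definition S0 :: "real \<Rightarrow> real \<Rightarrow> real \<Rightarrow> real" where
  "S0 g1 g2 tau0 = (\<Sum>n. (tau0 * MB g1 g2) ^ n / fact n * 1)"

lemma phiL_rem:
  assumes t: "0 \<le> t" "t \<le> tau0"
  shows "norm (phiL g1 g2 t x - x - t *\<^sub>R Bmap g1 g2 x) \<le> MB g1 g2 ^ 2 * S0 g1 g2 tau0 * t ^ 2 * norm x"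
proof -
  let ?a = "\<lambda>n. (t ^ n / fact n) *\<^sub>R ((Bmap g1 g2 ^^ n) x)"
  let ?M = "MB g1 g2"
  have M: "?M \<ge> 1" by (rule MB_pos)
  have "phiL g1 g2 t x = (\<Sum>n. ?a (n + 2)) + (\<Sum>i<2. ?a i)"
    unfolding phiL_def by (rule suminf_split_initial_segment[OF summable_ser])
  also have "(\<Sum>i<2. ?a i) = x + t *\<^sub>R Bmap g1 g2 x"
    by (simp add: numeral_2_eq_2)
  finally have eq: "phiL g1 g2 t x - x - t *\<^sub>R Bmap g1 g2 x = (\<Sum>n. ?a (n + 2))" by simp
  have bnd: "norm (?a (n + 2)) \<le> (tau0 * ?M) ^ n / fact n * (?M ^ 2 * t ^ 2 * norm x)" for n
  proof -
    have "norm (?a (n + 2)) \<le> (\<bar>t\<bar> * ?M) ^ (n + 2) / fact (n + 2) * norm x" by (rule ser_bound)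
    also have "\<dots> \<le> (t * ?M) ^ (n + 2) / fact n * norm x"
    proof -
      have "fact n \<le> (fact (n+2) :: real)" by (intro fact_mono) auto
      moreover have "(0::real) < fact n" by simp
      ultimately have "(t * ?M) ^ (n + 2) / fact (n + 2) \<le> (t * ?M) ^ (n + 2) / fact n"
        using t M by (intro divide_left_mono) auto
      then show ?thesis using t by (intro mult_right_mono) auto
    qed
    also have "(t * ?M) ^ (n + 2) = (t * ?M) ^ n * (?M ^ 2 * t ^ 2)" by (simp add: power_add power_mult_distrib power2_eq_square mult_ac)
    also have "(t * ?M) ^ n \<le> (tau0 * ?M) ^ n" using t M by (intro power_mono mult_right_mono) auto
    then have "(t * ?M) ^ n * (?M ^ 2 * t ^ 2) / fact n * norm x \<le> (tau0 * ?M) ^ n * (?M ^ 2 * t ^ 2) / fact n * norm x"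
      by (intro mult_right_mono divide_right_mono) auto
    finally show ?thesis by simp
  qed
  have "norm (\<Sum>n. ?a (n + 2)) \<le> (\<Sum>n. (tau0 * ?M) ^ n / fact n * (?M ^ 2 * t ^ 2 * norm x))"
    by (rule norm_suminf_le[OF bnd summable_expser])
  also have "\<dots> = (\<Sum>n. (tau0 * ?M) ^ n / fact n * 1) * (?M ^ 2 * t ^ 2 * norm x)"
    using suminf_mult2[OF summable_expser[of "tau0 * ?M" 1], of "?M ^ 2 * t ^ 2 * norm x"] by simp
  finally show ?thesis unfolding eq S0_def by (simp add: mult_ac)
qed

lemma S0_nonneg: "0 \<le> tau0 \<Longrightarrow> 0 \<le> S0 g1 g2 tau0"
  unfolding S0_def using MB_pos[of g1 g2]
  by (intro suminf_nonneg[OF summable_expser]) auto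



definition ee :: "real \<Rightarrow> real" where "ee t = exp (-2 * t)"
definition DD :: "real \<Rightarrow> real \<Rightarrow> real" where "DD t u = ee t + u^2 * (1 - ee t)"
definition ph :: "real \<Rightarrow> real \<Rightarrow> real" where "ph t u = u / sqrt (DD t u)"

lemma phiNL_eq: "phiNL b t x = (ph t (fst x), snd x + b * t)"
  unfolding phiNL_def ph_def DD_def ee_def by (simp add: algebra_simps)

lemma ee_pos: "0 < ee t" unfolding ee_def by simp
lemma ee_le1: "0 \<le> t \<Longrightarrow> ee t \<le> 1" unfolding ee_def by simp
lemma ee_ge: "t \<le> tau0 \<Longrightarrow> exp (-2 * tau0) \<le> ee t" unfolding ee_def by simp
lemma one_minus_ee: "0 \<le> t \<Longrightarrow> 1 - ee t \<le> 2 * t"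
  unfolding ee_def using exp_ge_add_one_self[of "-2*t"] by simp

lemma exp_neg_quad: assumes "0 \<le> (y::real)" shows "exp (- y) \<le> 1 - y + y^2"
proof -
  have "exp (-y) * (1 + y) \<le> exp (-y) * exp y"
    by (rule mult_left_mono) (use exp_ge_add_one_self[of y] in auto)
  then have "exp (-y) * (1 + y) \<le> 1" by (simp add: exp_minus field_simps)
  then have "exp (-y) \<le> 1 / (1 + y)" using assms by (simp add: field_simps)
  also have "1 / (1 + y) \<le> 1 - y + y^2"
  proof -
    have "1 \<le> (1 - y + y^2) * (1 + y)" using assms by (simp add: algebra_simps power2_eq_square power3_eq_cube)
    then show ?thesis using assms by (simp add: field_simps)
  qed
  finally show ?thesis .
qed

lemma ee_quad: "0 \<le> t \<Longrightarrow> 2 * t - (1 - ee t) \<le> 4 * t^2"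
  unfolding ee_def using exp_neg_quad[of "2*t"] by (simp add: power2_eq_square)

lemma DD_ge: "0 \<le> t \<Longrightarrow> ee t \<le> DD t u"
  unfolding DD_def using ee_le1[of t] by simp
lemma DD_pos: "0 \<le> t \<Longrightarrow> 0 < DD t u"
  using DD_ge[of t u] ee_pos[of t] by linarith

lemma pow_le_15: assumes "0 \<le> (r::real)" "k \<le> 5" shows "r ^ k \<le> 1 + r ^ 5"
proof (cases "r \<le> 1")
  case True
  then have "r ^ k \<le> 1" using assms by (simp add: power_le_one)
  then show ?thesis using assms zero_le_power[of r 5] by linarith
next
  case False
  then have "r ^ k \<le> r ^ 5" using assms by (intro power_increasing) auto
  then show ?thesis by simp
qed

lemma ph_deriv: assumes "0 \<le> t"
  shows "(ph t has_real_derivative ee t / (DD t u * sqrt (DD t u))) (at u)"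
proof -
  have D: "0 < DD t u" using DD_pos[OF assms] .
  have "((\<lambda>u. u / sqrt (ee t + u^2 * (1 - ee t))) has_real_derivative
     (1 * sqrt (DD t u) - u * ((2 * u * (1 - ee t)) * inverse (sqrt (DD t u)) / 2)) / (sqrt (DD t u))^2) (at u)"
    using D unfolding DD_def
    by (auto intro!: derivative_eq_intros simp: power2_eq_square)
  moreover have "(1 * sqrt (DD t u) - u * ((2 * u * (1 - ee t)) * inverse (sqrt (DD t u)) / 2)) / (sqrt (DD t u))^2
      = ee t / (DD t u * sqrt (DD t u))"
  proof -
    have s: "sqrt (DD t u) ^ 2 = DD t u" using D by simp
    have sp: "sqrt (DD t u) > 0" using D by simp
    have "1 * sqrt (DD t u) - u * ((2 * u * (1 - ee t)) * inverse (sqrt (DD t u)) / 2)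
        = (sqrt (DD t u) ^ 2 - u^2 * (1 - ee t)) / sqrt (DD t u)"
      using sp by (simp add: field_simps power2_eq_square)
    also have "\<dots> = ee t / sqrt (DD t u)" unfolding s by (simp add: DD_def)
    finally show ?thesis unfolding s using D sp by (simp add: field_simps)
  qed
  ultimately show ?thesis unfolding ph_def DD_def by simp
qed



lemma sqrt_ee: "sqrt (ee t) = exp (- t)"
  unfolding ee_def by (metis exp_ge_zero mult_minus_left real_sqrt_abs2 exp_add
     mult_2 abs_exp_cancel minus_add_distrib power2_eq_square) 

lemma s_ge: assumes "0 \<le> t" "t \<le> tau0"
  shows "exp (-2 * tau0) \<le> sqrt (DD t u)"
proof -
  have e1: "ee t \<le> 1" using assms by (simp add: ee_le1)
  have "ee t \<le> sqrt (ee t)"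
  proof -
    have "sqrt (ee t) \<le> 1" using e1 by simp
    then have "sqrt (ee t) * sqrt (ee t) \<le> sqrt (ee t)" using ee_pos[of t] by (intro mult_left_le) auto
    then show ?thesis by (metis abs_of_pos ee_pos real_sqrt_mult_self)
  qed
  also have "sqrt (ee t) \<le> sqrt (DD t u)" using DD_ge[OF assms(1)] by simp
  finally show ?thesis using ee_ge[OF assms(2)] by linarith
qed

lemma ph_abs: assumes "0 \<le> t" "t \<le> tau0"
  shows "\<bar>ph t u\<bar> \<le> exp tau0 * \<bar>u\<bar>"
proof -
  have "sqrt (ee t) \<le> sqrt (DD t u)" using DD_ge[OF assms(1)] by simp
  then have "exp (-t) \<le> sqrt (DD t u)" by (simp add: sqrt_ee)
  then have "\<bar>u\<bar> / sqrt (DD t u) \<le> \<bar>u\<bar> / exp (-t)"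
    using DD_pos[OF assms(1), of u] by (intro divide_left_mono) auto
  also have "\<dots> = exp t * \<bar>u\<bar>" by (simp add: exp_minus field_simps)
  also have "\<dots> \<le> exp tau0 * \<bar>u\<bar>" using assms by (intro mult_right_mono) auto
  finally show ?thesis unfolding ph_def using DD_pos[OF assms(1), of u] by (simp add: abs_divide)
qed

lemma s_sq: "0 \<le> t \<Longrightarrow> sqrt (DD t u) ^ 2 = 1 + (1 - ee t) * (u^2 - 1)"
  using DD_pos[of t u] by (simp add: DD_def algebra_simps)

lemma ph_first: assumes "0 \<le> t" "t \<le> tau0"
  shows "\<bar>ph t u - u\<bar> \<le> 4 / exp (-2 * tau0) * t * (1 + \<bar>u\<bar> ^ 5)"
proof -
  define s where "s = sqrt (DD t u)"
  define a where "a = 1 - ee t"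
  define \<delta> where "\<delta> = exp (-2 * tau0)"
  have dp: "0 < \<delta>" unfolding \<delta>_def by simp
  have sd: "\<delta> \<le> s" unfolding s_def \<delta>_def using s_ge[OF assms] .
  have sp: "0 < s" using dp sd by linarith
  have ss: "s^2 = 1 + a * (u^2 - 1)" unfolding s_def a_def using s_sq[OF assms(1)] .
  have a0: "0 \<le> a" unfolding a_def using ee_le1[OF assms(1)] by simp
  have a2: "a \<le> 2 * t" unfolding a_def using one_minus_ee[OF assms(1)] .
  have "ph t u - u = u * (1 - s) / s" unfolding ph_def s_def[symmetric] using sp by (simp add: field_simps)
  have e1: "\<bar>1 - s\<bar> \<le> \<bar>s^2 - 1\<bar>"
  proof -
    have "s^2 - 1 = (s - 1) * (s + 1)" by (simp add: algebra_simps power2_eq_square)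
    then have "\<bar>s^2 - 1\<bar> = \<bar>s - 1\<bar> * (s + 1)" using sp by (simp add: abs_mult)
    moreover have "\<bar>s - 1\<bar> \<le> \<bar>s - 1\<bar> * (s + 1)" using sp by (simp add: mult_le_cancel_left1)
    ultimately show ?thesis by (simp add: abs_minus_commute)
  qed
  have e2: "\<bar>s^2 - 1\<bar> \<le> 2 * t * (1 + u^2)"
  proof -
    have "\<bar>s^2 - 1\<bar> = a * \<bar>u^2 - 1\<bar>" using ss a0 by (simp add: abs_mult)
    also have "\<dots> \<le> 2 * t * (1 + u^2)" using a0 a2 zero_le_power2[of u] by (intro mult_mono) (auto simp: abs_le_iff)
    finally show ?thesis .
  qed
  have "\<bar>ph t u - u\<bar> = \<bar>u\<bar> * \<bar>1 - s\<bar> / s"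
    using \<open>ph t u - u = u * (1 - s) / s\<close> sp by (simp add: abs_mult abs_divide)
  also have "\<dots> \<le> \<bar>u\<bar> * (2 * t * (1 + u^2)) / \<delta>"
    using e1 e2 sd dp sp assms by (intro frac_le mult_left_mono) auto
  also have "\<dots> = 2 / \<delta> * t * (\<bar>u\<bar> + \<bar>u\<bar>^3)" by (simp add: field_simps power2_eq_square power3_eq_cube)
  also have "\<dots> \<le> 2 / \<delta> * t * (2 * (1 + \<bar>u\<bar>^5))"
    using pow_le_15[of "\<bar>u\<bar>" 1] pow_le_15[of "\<bar>u\<bar>" 3] dp assms by (intro mult_left_mono) auto
  finally show ?thesis unfolding \<delta>_def by (simp add: field_simps)
qed



lemma ph_second: assumes "0 \<le> t" "t \<le> tau0"
  shows "\<bar>ph t u - u - t * (u - u^3)\<bar> \<le> (20 + 16 / exp (-2 * tau0)) * t^2 * (1 + \<bar>u\<bar> ^ 5)"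
proof -
  define s where "s = sqrt (DD t u)"
  define a where "a = 1 - ee t"
  define \<delta> where "\<delta> = exp (-2 * tau0)"
  define r where "r = \<bar>u\<bar>"
  have r0: "0 \<le> r" unfolding r_def by simp
  have ur: "u^2 = r^2" unfolding r_def by simp
  have dp: "0 < \<delta>" unfolding \<delta>_def by simp
  have sd: "\<delta> \<le> s" unfolding s_def \<delta>_def using s_ge[OF assms] .
  have sp: "0 < s" using dp sd by linarith
  have ss: "s^2 - 1 = a * (u^2 - 1)" unfolding s_def a_def using s_sq[OF assms(1)] by simp
  have a0: "0 \<le> a" unfolding a_def using ee_le1[OF assms(1)] by simp
  have a2: "a \<le> 2 * t" unfolding a_def using one_minus_ee[OF assms(1)] .
  have aq: "2 * t - a \<le> 4 * t^2" unfolding a_def using ee_quad[OF assms(1)] .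
  have id: "ph t u - u - t * (u - u^3) = u * ((s - 1)^2 * (s + 2) / (2 * s)) + u * (u^2 - 1) * t - u * (s^2 - 1) / 2"
    unfolding ph_def s_def[symmetric] using sp by (simp add: field_simps power2_eq_square power3_eq_cube)
  also have "\<dots> = u * ((s - 1)^2 * (s + 2) / (2 * s)) + u * (u^2 - 1) * ((2 * t - a) / 2)"
    unfolding ss by (simp add: field_simps)
  finally have id2: "ph t u - u - t * (u - u^3) = u * ((s - 1)^2 * (s + 2) / (2 * s)) + u * (u^2 - 1) * ((2 * t - a) / 2)" .
  have h0: "0 \<le> (s - 1)^2 * (s + 2) / (2 * s)" using sp by simp
  have h1: "(s - 1)^2 * (s + 2) / (2 * s) \<le> (s^2 - 1)^2 * (1 + 1 / \<delta>)"
  proof -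
    have q: "(s - 1)^2 \<le> (s^2 - 1)^2"
    proof -
      have "(s^2 - 1)^2 = (s - 1)^2 * (s + 1)^2" by (simp add: algebra_simps power2_eq_square)
      moreover have "(s - 1)^2 * 1 \<le> (s - 1)^2 * (s + 1)^2"
        using sp one_le_power[of "s + 1" 2] by (intro mult_left_mono) auto
      ultimately show ?thesis by simp
    qed
    have "(s - 1)^2 * (s + 2) / (2 * s) = (s - 1)^2 * (1/2 + 1/s)" using sp by (simp add: field_simps)
    also have "\<dots> \<le> (s^2 - 1)^2 * (1 + 1 / \<delta>)"
    proof (rule mult_mono[OF q])
      have "1 / s \<le> 1 / \<delta>" using sp sd dp by (intro divide_left_mono) auto
      then show "1/2 + 1/s \<le> 1 + 1 / \<delta>" by simp
    qed (use sp in auto)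
    finally show ?thesis .
  qed
  have w: "(s^2 - 1)^2 \<le> 4 * t^2 * (1 + r^2)^2"
  proof -
    have "\<bar>s^2 - 1\<bar> \<le> 2 * t * (1 + r^2)"
    proof -
      have "\<bar>s^2 - 1\<bar> = a * \<bar>u^2 - 1\<bar>" using ss a0 by (simp add: abs_mult)
      also have "\<dots> \<le> 2 * t * (1 + r^2)" using a0 a2 zero_le_power2[of u] ur
        by (intro mult_mono) (auto simp: abs_le_iff)
      finally show ?thesis .
    qed
    then have "\<bar>s^2 - 1\<bar>^2 \<le> (2 * t * (1 + r^2))^2" by (intro power_mono) auto
    then show ?thesis by (simp add: power_mult_distrib)
  qed
  have p1: "r \<le> 1 + r^5" using pow_le_15[OF r0, of 1] by simp
  have p3: "r^3 \<le> 1 + r^5" using pow_le_15[OF r0, of 3] by simp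
  have t1: "\<bar>u * ((s - 1)^2 * (s + 2) / (2 * s))\<bar> \<le> 16 * (1 + 1/\<delta>) * t^2 * (1 + r^5)"
  proof -
    have "\<bar>u * ((s - 1)^2 * (s + 2) / (2 * s))\<bar> = r * ((s - 1)^2 * (s + 2) / (2 * s))"
      using h0 sp unfolding r_def by (simp add: abs_mult)
    also have "\<dots> \<le> r * ((4 * t^2 * (1 + r^2)^2) * (1 + 1/\<delta>))"
      using h1 w r0 dp by (intro mult_left_mono order.trans[OF h1] mult_right_mono) auto
    also have "\<dots> = 4 * (1 + 1/\<delta>) * t^2 * (r + 2 * r^3 + r^5)"
      by (simp add: algebra_simps power2_eq_square power3_eq_cube eval_nat_numeral)
    also have "\<dots> \<le> 4 * (1 + 1/\<delta>) * t^2 * (4 * (1 + r^5))"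
      using p1 p3 dp by (intro mult_left_mono) auto
    also have "\<dots> = 16 * (1 + 1/\<delta>) * t^2 * (1 + r^5)" by (simp add: algebra_simps add_divide_distrib)
    finally show ?thesis .
  qed
  have t2: "\<bar>u * (u^2 - 1) * ((2 * t - a) / 2)\<bar> \<le> 4 * t^2 * (1 + r^5)"
  proof -
    have "\<bar>u * (u^2 - 1) * ((2 * t - a) / 2)\<bar> = r * \<bar>r^2 - 1\<bar> * ((2 * t - a) / 2)"
      using a2 ur unfolding r_def by (simp add: abs_mult)
    also have "\<dots> \<le> r * (1 + r^2) * (2 * t^2)"
      using aq a2 r0 by (intro mult_mono) (auto simp: abs_le_iff)
    also have "\<dots> = 2 * t^2 * (r + r^3)" by (simp add: algebra_simps power2_eq_square power3_eq_cube)
    also have "\<dots> \<le> 2 * t^2 * (2 * (1 + r^5))" using p1 p3 by (intro mult_left_mono) auto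
    finally show ?thesis by (simp add: algebra_simps)
  qed
  have "\<bar>ph t u - u - t * (u - u^3)\<bar> \<le> 16 * (1 + 1/\<delta>) * t^2 * (1 + r^5) + 4 * t^2 * (1 + r^5)"
    unfolding id2 by (rule order.trans[OF abs_triangle_ineq add_mono[OF t1 t2]])
  also have "\<dots> = (20 + 16 / \<delta>) * t^2 * (1 + r^5)" by (simp add: algebra_simps)
  finally show ?thesis unfolding \<delta>_def r_def .
qed



definition dd :: "real \<Rightarrow> real \<Rightarrow> real" where "dd t z = ee t / (DD t z * sqrt (DD t z))"

lemma dd_bound: assumes "0 \<le> t" "t \<le> tau0"
  shows "\<bar>dd t z - 1\<bar> \<le> t * (exp tau0 + 4 * z^2 / exp (-2 * tau0))"
proof -
  define e where "e = ee t"
  define D where "D = DD t z"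
  define \<delta> where "\<delta> = exp (-2 * tau0)"
  have ep: "0 < e" unfolding e_def by (rule ee_pos)
  have e1: "e \<le> 1" unfolding e_def using ee_le1[OF assms(1)] .
  have eD: "e \<le> D" unfolding e_def D_def using DD_ge[OF assms(1)] .
  have Dp: "0 < D" using ep eD by linarith
  have de: "\<delta> \<le> e" unfolding \<delta>_def e_def using ee_ge[OF assms(2)] .
  have dp: "0 < \<delta>" unfolding \<delta>_def by simp
  have sDp: "0 < sqrt D" using Dp by simp
  have sDD: "sqrt D * sqrt D = D" using Dp by simp
  have se: "exp (-t) \<le> sqrt D" using eD unfolding e_def by (simp flip: sqrt_ee)
  have up: "dd t z \<le> exp t"
  proof -
    have "dd t z = e / (D * sqrt D)" unfolding dd_def e_def D_def ..
    also have "\<dots> \<le> e / (e * exp (-t))"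
      using ep eD se by (intro divide_left_mono mult_mono) auto
    also have "\<dots> = exp t" using ep by (simp add: exp_minus field_simps)
    finally show ?thesis .
  qed
  have et: "exp t - 1 \<le> t * exp tau0"
  proof -
    have "exp t * (1 - t) \<le> exp t * exp (-t)"
      by (rule mult_left_mono) (use exp_ge_add_one_self[of "-t"] in auto)
    then have "exp t - 1 \<le> t * exp t" by (simp add: exp_minus algebra_simps)
    also have "\<dots> \<le> t * exp tau0" using assms by (intro mult_left_mono) auto
    finally show ?thesis .
  qed
  have sDe: "e \<le> sqrt D"
  proof -
    have "e \<le> sqrt e"
    proof -
      have "sqrt e \<le> 1" using e1 by simp
      then have "sqrt e * sqrt e \<le> sqrt e" using ep by (intro mult_left_le) auto
      then show ?thesis using ep by (metis abs_of_pos real_sqrt_mult_self)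
    qed
    also have "sqrt e \<le> sqrt D" using eD by simp
    finally show ?thesis .
  qed
  have lo: "(e / D)^2 \<le> dd t z"
  proof -
    have "e * (e * sqrt D) \<le> e * D"
    proof -
      have "e * sqrt D \<le> sqrt D * sqrt D" using sDe sDp by (intro mult_right_mono) auto
      then show ?thesis using ep sDD by (intro mult_left_mono) auto
    qed
    then have "(e / D)^2 \<le> e / (D * sqrt D)" using Dp sDp ep
      by (simp add: field_simps power2_eq_square)
    then show ?thesis unfolding dd_def e_def D_def .
  qed
  have q1: "e / D \<le> 1" using eD Dp by simp
  have q0: "0 \<le> e / D" using ep Dp by simp
  have "1 - (e / D)^2 \<le> 2 * (1 - e / D)"
  proof -
    have "1 - (e / D)^2 = (1 - e/D) * (1 + e/D)" by (simp add: algebra_simps power2_eq_square)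
    also have "\<dots> \<le> (1 - e/D) * 2" using q0 q1 by (intro mult_left_mono) auto
    finally show ?thesis by (simp add: algebra_simps)
  qed
  also have "1 - e / D = z^2 * (1 - e) / D" using Dp unfolding D_def e_def DD_def by (simp add: field_simps)
  also have "z^2 * (1 - e) / D \<le> z^2 * (2 * t) / \<delta>"
    using one_minus_ee[OF assms(1)] e1 de dp eD unfolding e_def
    by (intro frac_le mult_left_mono) auto
  finally have low: "1 - dd t z \<le> t * (4 * z^2 / \<delta>)" using lo by (simp add: field_simps)
  have c0: "0 \<le> 4 * z^2 / \<delta>" using dp by simp
  have A1: "dd t z - 1 \<le> t * (exp tau0 + 4 * z^2 / \<delta>)"
  proof -
    have "t * exp tau0 \<le> t * (exp tau0 + 4 * z^2 / \<delta>)" using c0 assms by (intro mult_left_mono) auto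
    then show ?thesis using up et by linarith
  qed
  have A2: "1 - dd t z \<le> t * (exp tau0 + 4 * z^2 / \<delta>)"
  proof -
    have "t * (4 * z^2 / \<delta>) \<le> t * (exp tau0 + 4 * z^2 / \<delta>)" using assms by (intro mult_left_mono) auto
    then show ?thesis using low by linarith
  qed
  show ?thesis using A1 A2 unfolding \<delta>_def abs_le_iff by linarith
qed

lemma between_sq: "u1 \<le> z \<Longrightarrow> z \<le> u2 \<Longrightarrow> z^2 \<le> u1^2 + u2^2" for u1 u2 z :: real
proof (cases "0 \<le> z")
  case True
  assume "u1 \<le> z" "z \<le> u2"
  then have "z^2 \<le> u2^2" using True by (intro power_mono) auto
  then show ?thesis by (smt (verit) zero_le_power2)
next
  case False
  assume "u1 \<le> z" "z \<le> u2"
  then have "(-z)^2 \<le> (-u1)^2" using False by (intro power_mono) auto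
  then show ?thesis by (smt (verit) zero_le_power2 power2_minus)
qed

lemma ph_mvt: assumes "0 \<le> t"
  shows "\<exists>z. ph t u2 - ph t u1 = (u2 - u1) * dd t z \<and> z^2 \<le> u1^2 + u2^2"
proof -
  have der: "\<And>x. (ph t has_real_derivative dd t x) (at x)" unfolding dd_def by (rule ph_deriv[OF assms])
  consider "u1 < u2" | "u1 = u2" | "u2 < u1" by linarith
  then show ?thesis
  proof cases
    case 1
    from MVT2[OF 1 der] obtain z where "u1 < z" "z < u2" "ph t u2 - ph t u1 = (u2 - u1) * dd t z" by blast
    then show ?thesis using between_sq[of u1 z u2] by auto
  next
    case 2
    then show ?thesis by (intro exI[of _ u1]) auto
  next
    case 3
    from MVT2[OF 3 der] obtain z where "u2 < z" "z < u1" "ph t u1 - ph t u2 = (u1 - u2) * dd t z" by blast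
    then show ?thesis using between_sq[of u2 z u1]
      by (intro exI[of _ z]) (auto simp: algebra_simps)
  qed
qed



lemma dd_up: assumes "0 \<le> t" "t \<le> tau0"
  shows "dd t z - 1 \<le> t * exp tau0" and "0 < dd t z" and "dd t z \<le> exp tau0"
proof -
  define e where "e = ee t"
  define D where "D = DD t z"
  have ep: "0 < e" unfolding e_def by (rule ee_pos)
  have eD: "e \<le> D" unfolding e_def D_def using DD_ge[OF assms(1)] .
  have Dp: "0 < D" using ep eD by linarith
  have se: "exp (-t) \<le> sqrt D" using eD unfolding e_def by (simp flip: sqrt_ee)
  have up: "dd t z \<le> exp t"
  proof -
    have "dd t z = e / (D * sqrt D)" unfolding dd_def e_def D_def ..
    also have "\<dots> \<le> e / (e * exp (-t))"
      using ep eD se by (intro divide_left_mono mult_mono) auto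
    also have "\<dots> = exp t" using ep by (simp add: exp_minus field_simps)
    finally show ?thesis .
  qed
  have "exp t * (1 - t) \<le> exp t * exp (-t)"
    by (rule mult_left_mono) (use exp_ge_add_one_self[of "-t"] in auto)
  then have "exp t - 1 \<le> t * exp t" by (simp add: exp_minus algebra_simps)
  also have "\<dots> \<le> t * exp tau0" using assms by (intro mult_left_mono) auto
  finally show "dd t z - 1 \<le> t * exp tau0" using up by linarith
  show "0 < dd t z" unfolding dd_def using ep Dp unfolding e_def D_def by simp
  show "dd t z \<le> exp tau0" using up assms by (meson exp_le_cancel_iff order_trans)
qed

lemma phiL_rem2:
  assumes "0 \<le> t" "t \<le> tau0"
  shows "norm (phiL g1 g2 t y2 - phiL g1 g2 t y1 - (y2 - y1) - t *\<^sub>R Bmap g1 g2 (y2 - y1))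
     \<le> MB g1 g2 ^ 2 * S0 g1 g2 tau0 * t ^ 2 * norm (y2 - y1)"
  using phiL_rem[OF assms, of g1 g2 "y2 - y1"] phiL_diff[of g1 g2 t y2 y1] by simp

lemma psi_mult: assumes "t \<noteq> 0"
  shows "t *\<^sub>R psi g1 g2 b t x = phiL g1 g2 t (phiNL b t x) - x"
  using assms unfolding psi_def phi_def by simp

lemma Ffield_eq: "Ffield g1 g2 b x = (fst x - fst x ^ 3, b) + Bmap g1 g2 x"
  unfolding Ffield_def Bmap_def by (simp add: algebra_simps)

lemma sq_le_cube: assumes "0 \<le> (r::real)" shows "r^2 \<le> 1 + r^3"
proof (cases "r \<le> 1")
  case True
  then have "r^2 \<le> 1" using assms by (simp add: power_le_one)
  then show ?thesis using assms zero_le_power[of r 3] by linarith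
next
  case False
  then have "r^2 \<le> r^3" using assms by (intro power_increasing) auto
  then show ?thesis by simp
qed

lemma pow_nonneg_norm: "0 \<le> norm (x::real\<times>real) ^ n" by simp



lemma diff_bounds:
  fixes g1 g2 b t tau0 :: real and x1 x2 :: "real \<times> real"
  assumes t0: "0 < t" and t1: "t < tau0"
  defines "M \<equiv> MB g1 g2" and "K2 \<equiv> MB g1 g2 ^ 2 * S0 g1 g2 tau0" and "X \<equiv> exp tau0" and "\<delta> \<equiv> exp (-2 * tau0)"
  shows "inner (x2 - x1) (psi g1 g2 b t x2 - psi g1 g2 b t x1) \<le> (X + (M + K2 * tau0) * (X + 1)) * norm (x2 - x1) ^ 2"
    and "norm (psi g1 g2 b t x2 - psi g1 g2 b t x1) \<le> (X + 8 / \<delta> + (M + K2 * tau0) * (X + 1)) * (1 + norm x1 ^ 3 + norm x2 ^ 3) * norm (x2 - x1)"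
proof -
  have tz: "0 \<le> t" "t \<le> tau0" using t0 t1 by auto
  have M1: "1 \<le> M" unfolding M_def by (rule MB_pos)
  have K20: "0 \<le> K2" unfolding K2_def using S0_nonneg[of tau0 g1 g2] tz by simp
  have X0: "0 < X" unfolding X_def by simp
  have dp: "0 < \<delta>" unfolding \<delta>_def by simp
  obtain u1 v1 where x1: "x1 = (u1, v1)" by (cases x1)
  obtain u2 v2 where x2: "x2 = (u2, v2)" by (cases x2)
  define E where "E = phiL g1 g2 t"
  define B where "B = Bmap g1 g2"
  define N1 where "N1 = phiNL b t x1"
  define N2 where "N2 = phiNL b t x2"
  define du where "du = u2 - u1"
  define dv where "dv = v2 - v1"
  define dx where "dx = x2 - x1"
  have dx_eq: "dx = (du, dv)" unfolding dx_def du_def dv_def x1 x2 by simp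
  have ndu: "\<bar>du\<bar> \<le> norm dx" using abs_le_norm_fst[of dx] unfolding dx_eq by simp
  have ndv: "\<bar>dv\<bar> \<le> norm dx" using abs_le_norm_snd[of dx] unfolding dx_eq by simp
  obtain z where z: "ph t u2 - ph t u1 = du * dd t z" "z^2 \<le> u1^2 + u2^2"
    using ph_mvt[OF tz(1), of u2 u1] unfolding du_def by auto
  define dN where "dN = N2 - N1"
  have dN_eq: "dN = (du * dd t z, dv)"
    unfolding dN_def N1_def N2_def phiNL_eq x1 x2 using z(1) by (simp add: dv_def)
  have ddp: "0 < dd t z" "dd t z \<le> X" "dd t z - 1 \<le> t * X" using dd_up[OF tz, of z] unfolding X_def by auto
  have ndN: "norm dN \<le> (X + 1) * norm dx"
  proof -
    have "norm dN \<le> \<bar>du * dd t z\<bar> + \<bar>dv\<bar>" unfolding dN_eq by (rule norm_pair_le_abs)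
    also have "\<bar>du * dd t z\<bar> = \<bar>du\<bar> * dd t z" using ddp by (simp add: abs_mult)
    also have "\<bar>du\<bar> * dd t z \<le> norm dx * X" using ndu ddp by (intro mult_mono) auto
    finally show ?thesis using ndv by (simp add: algebra_simps)
  qed
  define \<rho> where "\<rho> = E N2 - E N1 - dN - t *\<^sub>R B dN"
  have nrho: "norm \<rho> \<le> K2 * t^2 * norm dN"
    unfolding \<rho>_def E_def B_def dN_def K2_def using phiL_rem2[OF tz, of g1 g2 N2 N1] by simp
  have key: "psi g1 g2 b t x2 - psi g1 g2 b t x1 = (1 / t) *\<^sub>R ((dN - dx) + t *\<^sub>R B dN + \<rho>)"
  proof -
    have "t *\<^sub>R (psi g1 g2 b t x2 - psi g1 g2 b t x1) = (E N2 - x2) - (E N1 - x1)"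
      using psi_mult[of t g1 g2 b x2] psi_mult[of t g1 g2 b x1] t0
      unfolding E_def N1_def N2_def by (simp add: scaleR_diff_right)
    also have "\<dots> = (dN - dx) + t *\<^sub>R B dN + \<rho>" unfolding \<rho>_def dN_def dx_def by (simp add: algebra_simps)
    finally have "t *\<^sub>R (psi g1 g2 b t x2 - psi g1 g2 b t x1) = (dN - dx) + t *\<^sub>R B dN + \<rho>" .
    then show ?thesis using t0 by (metis (no_types, lifting) divide_self_if mult.commute nonzero_eq_divide_eq
        order_less_irrefl scaleR_one scaleR_scaleR)
  qed
  have dNdx: "dN - dx = (du * (dd t z - 1), 0)" unfolding dN_eq dx_eq by (simp add: algebra_simps)
  have nBdN: "norm (B dN) \<le> M * ((X + 1) * norm dx)"
    unfolding B_def M_def using Bmap_norm[of g1 g2 dN] ndN M1 unfolding M_def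
    by (meson mult_left_mono order_trans zero_le_one order.trans[OF zero_le_one])
  have nrho2: "norm \<rho> \<le> K2 * t^2 * ((X + 1) * norm dx)"
    using nrho ndN K20 by (meson mult_left_mono order_trans mult_nonneg_nonneg zero_le_power2)
  have i1: "inner dx (dN - dx) \<le> t * X * norm dx ^ 2"
  proof -
    have "inner dx (dN - dx) = du^2 * (dd t z - 1)" by (simp only: dNdx, simp add: dx_eq power2_eq_square)
    also have "\<dots> \<le> du^2 * (t * X)" using ddp by (intro mult_left_mono) auto
    also have "du^2 \<le> norm dx ^ 2" using ndu by (metis abs_ge_zero power2_abs power_mono)
    then have "du^2 * (t * X) \<le> norm dx ^ 2 * (t * X)" using t0 X0 by (intro mult_right_mono) auto
    finally show ?thesis by (simp add: mult_ac)
  qed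
  have i2: "inner dx (B dN) \<le> M * (X + 1) * norm dx ^ 2"
  proof -
    have "inner dx (B dN) \<le> norm dx * norm (B dN)" by (rule norm_cauchy_schwarz)
    also have "\<dots> \<le> norm dx * (M * ((X + 1) * norm dx))" using nBdN by (intro mult_left_mono) auto
    finally show ?thesis by (simp add: power2_eq_square mult_ac)
  qed
  have i3: "inner dx \<rho> \<le> K2 * t^2 * (X + 1) * norm dx ^ 2"
  proof -
    have "inner dx \<rho> \<le> norm dx * norm \<rho>" by (rule norm_cauchy_schwarz)
    also have "\<dots> \<le> norm dx * (K2 * t^2 * ((X + 1) * norm dx))" using nrho2 by (intro mult_left_mono) auto
    finally show ?thesis by (simp add: power2_eq_square mult_ac)
  qed
  have "inner dx (psi g1 g2 b t x2 - psi g1 g2 b t x1) = (inner dx (dN - dx) + t * inner dx (B dN) + inner dx \<rho>) / t"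
    unfolding key by (simp add: inner_add_right)
  also have "\<dots> \<le> (t * X * norm dx ^ 2 + t * (M * (X + 1) * norm dx ^ 2) + K2 * t^2 * (X + 1) * norm dx ^ 2) / t"
    using i1 i2 i3 t0 by (intro divide_right_mono add_mono mult_left_mono) auto
  also have "\<dots> = (X + M * (X + 1) + K2 * t * (X + 1)) * norm dx ^ 2"
    using t0 by (simp add: field_simps power2_eq_square)
  also have "\<dots> \<le> (X + (M + K2 * tau0) * (X + 1)) * norm dx ^ 2"
  proof -
    have "K2 * t * (X + 1) \<le> K2 * tau0 * (X + 1)" using K20 tz X0 by (intro mult_right_mono mult_left_mono) auto
    then show ?thesis by (intro mult_right_mono) (auto simp: algebra_simps)
  qed
  finally show "inner (x2 - x1) (psi g1 g2 b t x2 - psi g1 g2 b t x1) \<le> (X + (M + K2 * tau0) * (X + 1)) * norm (x2 - x1) ^ 2"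
    unfolding dx_def .
  define A where "A = 1 + norm x1 ^ 3 + norm x2 ^ 3"
  have A1: "1 \<le> A" unfolding A_def by simp
  have zA: "z^2 \<le> 2 * A"
  proof -
    have "u1^2 \<le> norm x1 ^ 2" using abs_le_norm_fst[of x1] unfolding x1 by (metis abs_ge_zero fst_conv power2_abs power_mono)
    moreover have "u2^2 \<le> norm x2 ^ 2" using abs_le_norm_fst[of x2] unfolding x2 by (metis abs_ge_zero fst_conv power2_abs power_mono)
    moreover have "norm x1 ^ 2 \<le> 1 + norm x1 ^ 3" by (rule sq_le_cube) simp
    moreover have "norm x2 ^ 2 \<le> 1 + norm x2 ^ 3" by (rule sq_le_cube) simp
    ultimately show ?thesis using z(2) pow_nonneg_norm[of x1 3] pow_nonneg_norm[of x2 3] unfolding A_def by (smt (verit))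
  qed
  have n1: "norm (dN - dx) \<le> t * ((X + 8 / \<delta>) * A) * norm dx"
  proof -
    have "norm (dN - dx) = \<bar>du\<bar> * \<bar>dd t z - 1\<bar>" unfolding dNdx by (simp add: abs_mult)
    also have "\<bar>dd t z - 1\<bar> \<le> t * (X + 4 * z^2 / \<delta>)" using dd_bound[OF tz, of z] unfolding X_def \<delta>_def .
    also have "X + 4 * z^2 / \<delta> \<le> (X + 8 / \<delta>) * A"
    proof -
      have "4 * z^2 / \<delta> \<le> 4 * (2 * A) / \<delta>" using zA dp by (intro divide_right_mono) auto
      also have "\<dots> = 8 / \<delta> * A" by simp
      finally have "X + 4 * z^2 / \<delta> \<le> X * A + 8 / \<delta> * A" using A1 X0 by (smt (verit) mult_le_cancel_left1)
      then show ?thesis by (simp add: algebra_simps)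
    qed
    then have "t * (X + 4 * z^2 / \<delta>) \<le> t * ((X + 8 / \<delta>) * A)" using tz by (intro mult_left_mono) auto
    finally have "norm (dN - dx) \<le> \<bar>du\<bar> * (t * ((X + 8 / \<delta>) * A))" by (simp add: mult_left_mono)
    also have "\<dots> \<le> norm dx * (t * ((X + 8 / \<delta>) * A))" using ndu t0 X0 dp A1
      by (intro mult_right_mono) auto
    finally show ?thesis by (simp add: mult_ac)
  qed
  have "norm (psi g1 g2 b t x2 - psi g1 g2 b t x1) \<le> (norm (dN - dx) + t * norm (B dN) + norm \<rho>) / t"
  proof -
    have "norm (psi g1 g2 b t x2 - psi g1 g2 b t x1) = norm ((dN - dx) + t *\<^sub>R B dN + \<rho>) / t"
      unfolding key using t0 by simp
    also have "norm ((dN - dx) + t *\<^sub>R B dN + \<rho>) \<le> norm (dN - dx) + t * norm (B dN) + norm \<rho>"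
      using t0 by (smt (verit) norm_scaleR norm_triangle_ineq abs_of_pos)
    finally show ?thesis using t0 by (simp add: divide_right_mono)
  qed
  also have "\<dots> \<le> (t * ((X + 8 / \<delta>) * A) * norm dx + t * (M * ((X + 1) * norm dx)) + K2 * t^2 * ((X + 1) * norm dx)) / t"
    using n1 nBdN nrho2 t0 by (intro divide_right_mono add_mono mult_left_mono) auto
  also have "\<dots> = ((X + 8 / \<delta>) * A + M * (X + 1) + K2 * t * (X + 1)) * norm dx"
    using t0 by (simp add: field_simps power2_eq_square)
  also have "\<dots> \<le> (X + 8 / \<delta> + (M + K2 * tau0) * (X + 1)) * A * norm dx"
  proof -
    have "K2 * t * (X + 1) \<le> K2 * tau0 * (X + 1)" using K20 tz X0 by (intro mult_right_mono mult_left_mono) auto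
    moreover have "(M + K2 * tau0) * (X + 1) \<le> (M + K2 * tau0) * (X + 1) * A"
    proof -
      have P: "0 \<le> (M + K2 * tau0) * (X + 1)" using M1 K20 X0 tz by (intro mult_nonneg_nonneg) auto
      show ?thesis using mult_left_mono[OF A1 P] by simp
    qed
    ultimately have "(X + 8 / \<delta>) * A + M * (X + 1) + K2 * t * (X + 1) \<le> (X + 8 / \<delta> + (M + K2 * tau0) * (X + 1)) * A"
      by (simp add: algebra_simps)
    then show ?thesis by (intro mult_right_mono) auto
  qed
  finally show "norm (psi g1 g2 b t x2 - psi g1 g2 b t x1) \<le> (X + 8 / \<delta> + (M + K2 * tau0) * (X + 1)) * (1 + norm x1 ^ 3 + norm x2 ^ 3) * norm (x2 - x1)"
    unfolding dx_def A_def .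
qed



lemma point_bound:
  fixes g1 g2 b t tau0 :: real and x :: "real \<times> real"
  assumes t0: "0 < t" and t1: "t < tau0"
  defines "M \<equiv> MB g1 g2" and "K2 \<equiv> MB g1 g2 ^ 2 * S0 g1 g2 tau0" and "X \<equiv> exp tau0" and "\<delta> \<equiv> exp (-2 * tau0)"
  shows "norm (psi g1 g2 b t x - Ffield g1 g2 b x)
     \<le> (K2 * (X + 1 + \<bar>b\<bar> * tau0) + (20 + 16 / \<delta>) + M * (4 / \<delta> + \<bar>b\<bar>)) * t * (1 + norm x ^ 5)"
proof -
  have tz: "0 \<le> t" "t \<le> tau0" using t0 t1 by auto
  have M1: "1 \<le> M" unfolding M_def by (rule MB_pos)
  have K20: "0 \<le> K2" unfolding K2_def using S0_nonneg[of tau0 g1 g2] tz by simp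
  have X0: "0 < X" unfolding X_def by simp
  have dp: "0 < \<delta>" unfolding \<delta>_def by simp
  obtain u v where x: "x = (u, v)" by (cases x)
  define r where "r = norm x"
  define R where "R = 1 + r ^ 5"
  have r0: "0 \<le> r" unfolding r_def by simp
  have ur: "\<bar>u\<bar> \<le> r" using abs_le_norm_fst[of x] unfolding r_def x by simp
  have vr: "\<bar>v\<bar> \<le> r" using abs_le_norm_snd[of x] unfolding r_def x by simp
  have rR: "r \<le> R" unfolding R_def using pow_le_15[OF r0, of 1] by simp
  have R1: "1 \<le> R" unfolding R_def using r0 by simp
  have u5: "1 + \<bar>u\<bar> ^ 5 \<le> R" unfolding R_def using ur by (simp add: power_mono)
  define E where "E = phiL g1 g2 t"
  define B where "B = Bmap g1 g2"
  define N where "N = phiNL b t x"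
  have N_eq: "N = (ph t u, v + b * t)" unfolding N_def phiNL_eq x by simp
  define \<rho> where "\<rho> = E N - N - t *\<^sub>R B N"
  define P where "P = ph t u - u - t * (u - u^3)"
  have nrho: "norm \<rho> \<le> K2 * t^2 * norm N"
    unfolding \<rho>_def E_def B_def K2_def using phiL_rem[OF tz, of g1 g2 N] by simp
  have nN: "norm N \<le> (X + 1 + \<bar>b\<bar> * tau0) * R"
  proof -
    have "norm N \<le> \<bar>ph t u\<bar> + \<bar>v + b * t\<bar>" unfolding N_eq by (rule norm_pair_le_abs)
    also have "\<dots> \<le> X * r + (r + \<bar>b\<bar> * tau0)"
    proof (rule add_mono)
      show "\<bar>ph t u\<bar> \<le> X * r" using ph_abs[OF tz, of u] mult_left_mono[OF ur, of X] X0 unfolding X_def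
        by linarith
      have "\<bar>b * t\<bar> \<le> \<bar>b\<bar> * tau0" using tz by (simp add: abs_mult mult_left_mono)
      then show "\<bar>v + b * t\<bar> \<le> r + \<bar>b\<bar> * tau0" using vr by linarith
    qed
    also have "\<dots> \<le> X * R + (R + \<bar>b\<bar> * tau0 * R)"
    proof -
      have "\<bar>b\<bar> * tau0 * 1 \<le> \<bar>b\<bar> * tau0 * R" using R1 tz by (intro mult_left_mono) auto
      then show ?thesis using rR mult_left_mono[OF rR, of X] X0 by linarith
    qed
    finally show ?thesis by (simp add: algebra_simps)
  qed
  have nP: "\<bar>P\<bar> \<le> (20 + 16 / \<delta>) * t^2 * R"
  proof -
    have K3: "0 \<le> (20 + 16 / \<delta>) * t^2" using dp by simp
    show ?thesis using ph_second[OF tz, of u] mult_left_mono[OF u5 K3] unfolding P_def \<delta>_def by linarith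
  qed
  have nB: "norm (B (N - x)) \<le> M * (4 / \<delta> + \<bar>b\<bar>) * t * R"
  proof -
    have "norm (B (N - x)) \<le> M * norm (N - x)" unfolding B_def M_def by (rule Bmap_norm)
    also have "norm (N - x) \<le> \<bar>ph t u - u\<bar> + \<bar>b * t\<bar>" unfolding N_eq x using norm_pair_le_abs by simp
    also have "\<bar>ph t u - u\<bar> \<le> 4 / \<delta> * t * R"
    proof -
      have K: "0 \<le> 4 / \<delta> * t" using dp tz by simp
      show ?thesis using ph_first[OF tz, of u] mult_left_mono[OF u5 K] unfolding \<delta>_def by linarith
    qed
    also have "\<bar>b * t\<bar> \<le> \<bar>b\<bar> * t * R" using mult_left_mono[OF R1, of "\<bar>b\<bar> * t"] tz by (simp add: abs_mult)
    finally show ?thesis using M1 by (simp add: algebra_simps mult_left_mono)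
  qed
  have key: "t *\<^sub>R (psi g1 g2 b t x - Ffield g1 g2 b x) = \<rho> + (P, 0) + t *\<^sub>R B (N - x)"
  proof -
    have "t *\<^sub>R (psi g1 g2 b t x - Ffield g1 g2 b x) = E N - x - t *\<^sub>R ((u - u^3, b) + B x)"
      using psi_mult[of t g1 g2 b x] t0 unfolding E_def N_def B_def Ffield_eq x by (simp add: scaleR_diff_right)
    also have "\<dots> = \<rho> + (N - x - t *\<^sub>R (u - u^3, b)) + t *\<^sub>R (B N - B x)"
      unfolding \<rho>_def by (simp add: algebra_simps)
    also have "N - x - t *\<^sub>R (u - u^3, b) = (P, 0)" unfolding N_eq x P_def by simp
    also have "B N - B x = B (N - x)" unfolding B_def by (simp add: Bmap_diff)
    finally show ?thesis .
  qed
  have "t * norm (psi g1 g2 b t x - Ffield g1 g2 b x) \<le> norm \<rho> + \<bar>P\<bar> + t * norm (B (N - x))"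
  proof -
    have "t * norm (psi g1 g2 b t x - Ffield g1 g2 b x) = norm (\<rho> + (P, 0) + t *\<^sub>R B (N - x))"
      unfolding key[symmetric] using t0 by simp
    also have "\<dots> \<le> norm \<rho> + norm (P, 0::real) + norm (t *\<^sub>R B (N - x))" by (rule norm_triangle_le) (rule add_mono[OF norm_triangle_ineq order.refl])
    finally show ?thesis using t0 by simp
  qed
  also have "\<dots> \<le> K2 * t^2 * ((X + 1 + \<bar>b\<bar> * tau0) * R) + (20 + 16 / \<delta>) * t^2 * R + t * (M * (4 / \<delta> + \<bar>b\<bar>) * t * R)"
    using nrho nN nP nB K20 tz by (intro add_mono mult_left_mono order.trans[OF nrho]) auto
  also have "\<dots> = t * ((K2 * (X + 1 + \<bar>b\<bar> * tau0) + (20 + 16 / \<delta>) + M * (4 / \<delta> + \<bar>b\<bar>)) * t * R)"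
    by (simp add: algebra_simps power2_eq_square)
  finally show ?thesis unfolding R_def r_def using t0 by simp
qed



theorem mainTheorem4:
  fixes g1 g2 b tau0 :: real
  assumes "tau0 > 0"
  shows "(\<exists>C>0. \<forall>tau\<in>{0<..<tau0}. \<forall>x1 x2 x :: real \<times> real.
            inner (x2 - x1) (psi g1 g2 b tau x2 - psi g1 g2 b tau x1) \<le> C * norm (x2 - x1) ^ 2
          \<and> norm (psi g1 g2 b tau x2 - psi g1 g2 b tau x1)
              \<le> C * (1 + norm x1 ^ 3 + norm x2 ^ 3) * norm (x2 - x1)
          \<and> norm (psi g1 g2 b tau x - Ffield g1 g2 b x) \<le> C * tau * (1 + norm x ^ 5))
       \<and> bdd_above ((\<lambda>tau. norm (psi g1 g2 b tau 0)) ` {0<..<tau0})"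
proof -
  define M where "M = MB g1 g2"
  define K2 where "K2 = MB g1 g2 ^ 2 * S0 g1 g2 tau0"
  define X where "X = exp tau0"
  define \<delta> where "\<delta> = exp (-2 * tau0)"
  define C1 where "C1 = X + (M + K2 * tau0) * (X + 1)"
  define C2 where "C2 = X + 8 / \<delta> + (M + K2 * tau0) * (X + 1)"
  define C3 where "C3 = K2 * (X + 1 + \<bar>b\<bar> * tau0) + (20 + 16 / \<delta>) + M * (4 / \<delta> + \<bar>b\<bar>)"
  have M1: "1 \<le> M" unfolding M_def by (rule MB_pos)
  have K20: "0 \<le> K2" unfolding K2_def using S0_nonneg[of tau0 g1 g2] assms by simp
  have X0: "0 < X" unfolding X_def by simp
  have dp: "0 < \<delta>" unfolding \<delta>_def by simp
  have P: "0 \<le> (M + K2 * tau0) * (X + 1)" using M1 K20 X0 assms by (intro mult_nonneg_nonneg) auto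
  have C10: "0 \<le> C1" unfolding C1_def using P X0 by simp
  have C20: "0 \<le> C2" unfolding C2_def using P X0 dp by simp
  have C30: "0 \<le> C3" unfolding C3_def using K20 X0 dp M1 assms by (intro add_nonneg_nonneg mult_nonneg_nonneg) auto
  define C where "C = 1 + C1 + C2 + C3"
  have C0: "0 < C" unfolding C_def using C10 C20 C30 by simp
  have CC1: "C1 \<le> C" and CC2: "C2 \<le> C" and CC3: "C3 \<le> C" unfolding C_def using C10 C20 C30 by auto
  have main: "\<forall>tau\<in>{0<..<tau0}. \<forall>x1 x2 x :: real \<times> real.
            inner (x2 - x1) (psi g1 g2 b tau x2 - psi g1 g2 b tau x1) \<le> C * norm (x2 - x1) ^ 2
          \<and> norm (psi g1 g2 b tau x2 - psi g1 g2 b tau x1)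
              \<le> C * (1 + norm x1 ^ 3 + norm x2 ^ 3) * norm (x2 - x1)
          \<and> norm (psi g1 g2 b tau x - Ffield g1 g2 b x) \<le> C * tau * (1 + norm x ^ 5)"
  proof (intro ballI allI conjI)
    fix tau :: real and x1 x2 x :: "real \<times> real"
    assume "tau \<in> {0<..<tau0}"
    then have t0: "0 < tau" and t1: "tau < tau0" by auto
    have "inner (x2 - x1) (psi g1 g2 b tau x2 - psi g1 g2 b tau x1) \<le> C1 * norm (x2 - x1) ^ 2"
      using diff_bounds(1)[OF t0 t1, of x2 x1 g1 g2 b] unfolding C1_def M_def K2_def X_def .
    also have "\<dots> \<le> C * norm (x2 - x1) ^ 2" using CC1 by (intro mult_right_mono) auto
    finally show "inner (x2 - x1) (psi g1 g2 b tau x2 - psi g1 g2 b tau x1) \<le> C * norm (x2 - x1) ^ 2" .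
    have "norm (psi g1 g2 b tau x2 - psi g1 g2 b tau x1) \<le> C2 * (1 + norm x1 ^ 3 + norm x2 ^ 3) * norm (x2 - x1)"
      using diff_bounds(2)[OF t0 t1, of g1 g2 b x2 x1] unfolding C2_def M_def K2_def X_def \<delta>_def .
    also have "\<dots> \<le> C * (1 + norm x1 ^ 3 + norm x2 ^ 3) * norm (x2 - x1)"
      using CC2 by (intro mult_right_mono) auto
    finally show "norm (psi g1 g2 b tau x2 - psi g1 g2 b tau x1) \<le> C * (1 + norm x1 ^ 3 + norm x2 ^ 3) * norm (x2 - x1)" .
    have "norm (psi g1 g2 b tau x - Ffield g1 g2 b x) \<le> C3 * tau * (1 + norm x ^ 5)"
      using point_bound[OF t0 t1, of g1 g2 b x] unfolding C3_def M_def K2_def X_def \<delta>_def .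
    also have "\<dots> \<le> C * tau * (1 + norm x ^ 5)"
      using CC3 t0 by (intro mult_right_mono) auto
    finally show "norm (psi g1 g2 b tau x - Ffield g1 g2 b x) \<le> C * tau * (1 + norm x ^ 5)" .
  qed
  have bdd: "bdd_above ((\<lambda>tau. norm (psi g1 g2 b tau 0)) ` {0<..<tau0})"
  proof (rule bdd_aboveI2)
    fix tau assume tin: "tau \<in> {0<..<tau0}"
    then have t0: "0 < tau" and t1: "tau < tau0" by auto
    have "norm (psi g1 g2 b tau 0 - Ffield g1 g2 b 0) \<le> C * tau * (1 + norm (0::real\<times>real) ^ 5)"
      using bspec[OF main tin] by blast
    then have "norm (psi g1 g2 b tau 0 - Ffield g1 g2 b 0) \<le> C * tau" by simp
    also have "C * tau \<le> C * tau0" using C0 t1 by simp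
    finally have "norm (psi g1 g2 b tau 0 - Ffield g1 g2 b 0) \<le> C * tau0" .
    then show "norm (psi g1 g2 b tau 0) \<le> norm (Ffield g1 g2 b 0) + C * tau0"
      using norm_triangle_ineq2[of "psi g1 g2 b tau 0" "Ffield g1 g2 b 0"] by linarith
  qed
  show ?thesis using main bdd C0 by blast
qed


end
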